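(* Let $f:\mathbb{R}^N\to\mathbb{R}\cup\{\infty\}$, $f(x)=\|x\|_1$ for $x\in[-1,1]^N$ and $f(x)=\infty$ otherwise. Let $K_1,K_{-1}\subseteq[N]$ be disjoint, $x_{\pm1}=\mathbb{1}_{K_1}-\mathbb{1}_{K_{-1}}$, $k=|K_1\cup K_{-1}|$. Then $$\partial f(x_{\pm1})=\{s\in\mathbb{R}^N: s_i\ge1\ (i\in K_1),\ s_i\le -1\ (i\in K_{-1}),\ |s_i|\le 1\ (i\notin K_1\cup K_{-1})\},$$ and $$\delta(\mathcal{D}(f,x_{\pm1}))\le\Delta_{\pm\mathrm{ter}}(k):=\inf_{\tau\ge0}\Big[k\int_{-\infty}^{\tau}(u-\tau)^2\phi(u)\,du+2(N-k)\int_\tau^\infty(u-\tau)^2\phi(u)\,du\Big],$$ with $\phi(u)=(2\pi)^{-1/2}e^{-u^2/2}$.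
   Context: $\mathbb{1}_S$ has entries $1$ on $S$, $0$ elsewhere. Subdifferential: $\partial f(x_0)=\{s: f(y)-f(x_0)\ge\langle s,y-x_0\rangle\ \forall y\in\mathbb{R}^N\}$. Descent cone: $\mathcal{D}(f,x)=\bigcup_{\tau>0}\{y\in\mathbb{R}^N: f(x+\tau y)\le f(x)\}$. Statistical dimension of a closed convex cone $C$ (applied here to the closure of the descent cone): $\delta(C)=\mathbb{E}\|\pi_C(g)\|_2^2$, where $g$ is a standard normal vector in $\mathbb{R}^N$ and $\pi_C$ is the Euclidean projection onto $C$. *)

theory Defs
  imports "HOL-Probability.Probability"
begin

definition subdifferential :: "(real^'n \<Rightarrow> ereal) \<Rightarrow> real^'n \<Rightarrow> (real^'n) set" where
  "subdifferential f x0 = {s. \<forall>y. f y - f x0 \<ge> ereal (s \<bullet> (y - x0))}"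

definition descent_cone :: "(real^'n \<Rightarrow> ereal) \<Rightarrow> real^'n \<Rightarrow> (real^'n) set" where
  "descent_cone f x = (\<Union>\<tau>\<in>{0<..}. {y. f (x + \<tau> *\<^sub>R y) \<le> f x})"

definition stat_dim :: "(real^'n) set \<Rightarrow> real" where
  "stat_dim C = (\<integral>g. (\<Prod>i\<in>UNIV. std_normal_density (g $ i)) * (norm (closest_point C g))\<^sup>2 \<partial>lborel)"

definition l1_box :: "real^'n \<Rightarrow> ereal" where
  "l1_box x = (if (\<forall>i. \<bar>x $ i\<bar> \<le> 1) then ereal (\<Sum>i\<in>UNIV. \<bar>x $ i\<bar>) else \<infinity>)"

definition Delta_pm_ter :: "nat \<Rightarrow> nat \<Rightarrow> real" where
  "Delta_pm_ter N k = (INF \<tau>\<in>{0..}.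
      real k * (LBINT u:{..\<tau>}. (u - \<tau>)\<^sup>2 * std_normal_density u)
    + 2 * (real N - real k) * (LBINT u:{\<tau>..}. (u - \<tau>)\<^sup>2 * std_normal_density u))"

end

theory Submission imports Defs begin

definition P1 :: "real \<Rightarrow> real \<Rightarrow> real" where
  "P1 \<tau> u = (if u \<le> \<tau> then (u - \<tau>)\<^sup>2 else 0)"
definition Q1 :: "real \<Rightarrow> real \<Rightarrow> real" where
  "Q1 \<tau> u = (if \<tau> \<le> u then (u - \<tau>)\<^sup>2 else 0)"

lemma P1_meas[measurable]: "P1 \<tau> \<in> borel_measurable borel"
  unfolding P1_def[abs_def] by measurable
lemma Q1_meas[measurable]: "Q1 \<tau> \<in> borel_measurable borel"
  unfolding Q1_def[abs_def] by measurable

lemma snd_even: "std_normal_density (-u) = std_normal_density u"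
  by (simp add: normal_density_def)

lemma integrable_sq_shift: "integrable lborel (\<lambda>u. std_normal_density u * (u - \<tau>)\<^sup>2)"
proof -
  have e: "std_normal_density u * (u - \<tau>)\<^sup>2 = std_normal_density u * u^2 - 2*\<tau> * (std_normal_density u * u^1) + \<tau>\<^sup>2 * std_normal_density u" for u
    by (simp add: power2_eq_square algebra_simps)
  show ?thesis unfolding e
    by (intro Bochner_Integration.integrable_diff Bochner_Integration.integrable_add
          integrable_mult_right integrable_std_normal_moment integrable_normal_density) auto
qed

lemma integrable_P1: "integrable lborel (\<lambda>u. std_normal_density u * P1 \<tau> u)"
  by (rule Bochner_Integration.integrable_bound[OF integrable_sq_shift[of \<tau>]]) (auto simp: P1_def)
lemma integrable_Q1: "integrable lborel (\<lambda>u. std_normal_density u * Q1 \<tau> u)"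
  by (rule Bochner_Integration.integrable_bound[OF integrable_sq_shift[of \<tau>]]) (auto simp: Q1_def)

definition AA :: "real \<Rightarrow> real" where "AA \<tau> = (LBINT u:{..\<tau>}. (u - \<tau>)\<^sup>2 * std_normal_density u)"
definition BB :: "real \<Rightarrow> real" where "BB \<tau> = (LBINT u:{\<tau>..}. (u - \<tau>)\<^sup>2 * std_normal_density u)"

lemma AA_eq: "AA \<tau> = (\<integral>u. std_normal_density u * P1 \<tau> u \<partial>lborel)"
  unfolding AA_def set_lebesgue_integral_def
  by (rule Bochner_Integration.integral_cong) (auto simp: P1_def indicator_def)
lemma BB_eq: "BB \<tau> = (\<integral>u. std_normal_density u * Q1 \<tau> u \<partial>lborel)"
  unfolding BB_def set_lebesgue_integral_def
  by (rule Bochner_Integration.integral_cong) (auto simp: Q1_def indicator_def)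

lemma nn_P1: "(\<integral>\<^sup>+u. ennreal (std_normal_density u * P1 \<tau> u) \<partial>lborel) = ennreal (AA \<tau>)"
  unfolding AA_eq by (rule nn_integral_eq_integral[OF integrable_P1]) (auto simp: P1_def)
lemma nn_Q1: "(\<integral>\<^sup>+u. ennreal (std_normal_density u * Q1 \<tau> u) \<partial>lborel) = ennreal (BB \<tau>)"
  unfolding BB_eq by (rule nn_integral_eq_integral[OF integrable_Q1]) (auto simp: Q1_def)

lemma nn_reflect:
  fixes f :: "real \<Rightarrow> ennreal"
  assumes [measurable]: "f \<in> borel_measurable borel"
  shows "(\<integral>\<^sup>+u. f u \<partial>lborel) = (\<integral>\<^sup>+u. f (- u) \<partial>lborel)"
  using nn_integral_real_affine[of f "-1" 0] by simp

lemma nn_P1_refl: "(\<integral>\<^sup>+u. ennreal (std_normal_density u * P1 \<tau> (-u)) \<partial>lborel) = ennreal (AA \<tau>)"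
  by (subst nn_P1[symmetric], subst nn_reflect[of "\<lambda>u. ennreal (std_normal_density u * P1 \<tau> u)"])
     (auto simp: snd_even)
lemma nn_Q1_refl: "(\<integral>\<^sup>+u. ennreal (std_normal_density u * Q1 \<tau> (-u)) \<partial>lborel) = ennreal (BB \<tau>)"
  by (subst nn_Q1[symmetric], subst nn_reflect[of "\<lambda>u. ennreal (std_normal_density u * Q1 \<tau> u)"])
     (auto simp: snd_even)

lemma nn_snd: "(\<integral>\<^sup>+u. ennreal (std_normal_density u) \<partial>lborel) = 1"
  by (subst nn_integral_eq_integral) auto

lemma AA_nonneg: "0 \<le> AA \<tau>" unfolding AA_eq
  by (rule Bochner_Integration.integral_nonneg) (auto simp: P1_def)
lemma BB_nonneg: "0 \<le> BB \<tau>" unfolding BB_eq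
  by (rule Bochner_Integration.integral_nonneg) (auto simp: Q1_def)

lemma Basis_vec_axis: "(Basis :: (real^'n) set) = (\<lambda>j. axis j 1) ` UNIV"
  by (auto simp: Basis_vec_def)

lemma nn_integral_vec_prod:
  fixes f :: "'n::finite \<Rightarrow> real \<Rightarrow> ennreal"
  assumes [measurable]: "\<And>j. f j \<in> borel_measurable borel"
  shows "(\<integral>\<^sup>+x. (\<Prod>j\<in>UNIV. f j (x $ j)) \<partial>(lborel :: (real^'n) measure)) = (\<Prod>j\<in>UNIV. \<integral>\<^sup>+u. f j u \<partial>lborel)"
proof -
  define F where "F b = f (SOME j. b = axis j (1::real))" for b :: "real^'n"
  have Fa: "F (axis j 1) = f j" for j
    unfolding F_def by (rule arg_cong[where f=f]) (metis (mono_tags) axis_eq_axis zero_neq_one someI_ex)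
  have inj: "inj (\<lambda>j::'n. axis j (1::real))" by (auto simp: inj_def axis_eq_axis)
  have "(\<integral>\<^sup>+x. (\<Prod>b\<in>Basis. F b (x \<bullet> b)) \<partial>(lborel :: (real^'n) measure)) = (\<Prod>b\<in>Basis. (\<integral>\<^sup>+x. F b x \<partial>lborel))"
    by (rule nn_integral_lborel_prod) (auto simp: Basis_vec_axis Fa)
  moreover have "(\<Prod>b\<in>Basis. F b (x \<bullet> b)) = (\<Prod>j\<in>UNIV. f j (x $ j))" for x :: "real^'n"
    by (simp add: Basis_vec_axis prod.reindex[OF inj] Fa inner_axis)
  moreover have "(\<Prod>b\<in>Basis. (\<integral>\<^sup>+x. F b x \<partial>lborel)) = (\<Prod>j\<in>UNIV. \<integral>\<^sup>+u. f j u \<partial>lborel)"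
    by (simp add: Basis_vec_axis prod.reindex[OF inj] Fa)
  ultimately show ?thesis by simp
qed

lemma nn_marginal:
  fixes h :: "real \<Rightarrow> real" and i :: "'n::finite"
  assumes [measurable]: "h \<in> borel_measurable borel" and nn: "\<And>u. 0 \<le> h u"
  shows "(\<integral>\<^sup>+x. ennreal ((\<Prod>j\<in>UNIV. std_normal_density (x $ j)) * h (x $ i)) \<partial>(lborel :: (real^'n) measure))
       = (\<integral>\<^sup>+u. ennreal (std_normal_density u * h u) \<partial>lborel)"
proof -
  define f where "f j u = ennreal (if j = i then std_normal_density u * h u else std_normal_density u)" for j u
  have fm[measurable]: "f j \<in> borel_measurable borel" for j unfolding f_def by measurable
  have e1: "ennreal ((\<Prod>j\<in>UNIV. std_normal_density (x $ j)) * h (x $ i)) = (\<Prod>j\<in>UNIV. f j (x $ j))" for x :: "real^'n"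
  proof -
    have "(\<Prod>j\<in>UNIV. std_normal_density (x $ j)) * h (x $ i) = (\<Prod>j\<in>UNIV. (if j = i then std_normal_density (x $ j) * h (x $ j) else std_normal_density (x $ j)))"
      by (simp add: prod.If_cases Int_absorb1 prod.remove[of UNIV i] Compl_eq_Diff_UNIV mult_ac)
    then show ?thesis unfolding f_def using nn by (simp add: prod_ennreal)
  qed
  have "(\<Prod>j\<in>UNIV. integral\<^sup>N lborel (f j)) = (\<Prod>j\<in>UNIV. if j = i then (\<integral>\<^sup>+u. ennreal (std_normal_density u * h u) \<partial>lborel) else 1)"
    by (rule prod.cong) (auto simp: f_def[abs_def] nn_snd)
  also have "\<dots> = (\<integral>\<^sup>+u. ennreal (std_normal_density u * h u) \<partial>lborel)"
    by (simp add: prod.If_cases)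
  finally show ?thesis unfolding e1 nn_integral_vec_prod[OF fm] .
qed

lemma P1_nonneg: "0 \<le> P1 \<tau> u" by (simp add: P1_def)
lemma Q1_nonneg: "0 \<le> Q1 \<tau> u" by (simp add: Q1_def)

lemma nn_total:
  fixes K1 Km1 :: "'n::finite set" and \<tau> :: real
  assumes "K1 \<inter> Km1 = {}"
  defines "hs \<equiv> (\<lambda>i u. if i \<in> K1 then P1 \<tau> u else if i \<in> Km1 then P1 \<tau> (-u) else Q1 \<tau> u + Q1 \<tau> (-u))"
  shows "(\<integral>\<^sup>+x. ennreal ((\<Prod>j\<in>UNIV. std_normal_density (x $ j)) * (\<Sum>i\<in>UNIV. hs i (x $ i))) \<partial>(lborel :: (real^'n) measure))
     = ennreal (real (card (K1 \<union> Km1)) * AA \<tau> + 2 * (real CARD('n) - real (card (K1 \<union> Km1))) * BB \<tau>)"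
proof -
  have hm[measurable]: "hs i \<in> borel_measurable borel" for i unfolding hs_def by measurable
  have hn: "0 \<le> hs i u" for i u unfolding hs_def by (auto intro: P1_nonneg Q1_nonneg add_nonneg_nonneg)
  have "(\<integral>\<^sup>+x. ennreal ((\<Prod>j\<in>UNIV. std_normal_density (x $ j)) * (\<Sum>i\<in>UNIV. hs i (x $ i))) \<partial>(lborel :: (real^'n) measure))
      = (\<integral>\<^sup>+x. (\<Sum>i\<in>UNIV. ennreal ((\<Prod>j\<in>UNIV. std_normal_density (x $ j)) * hs i (x $ i))) \<partial>(lborel :: (real^'n) measure))"
    by (rule nn_integral_cong) (subst sum_ennreal, auto intro!: mult_nonneg_nonneg prod_nonneg hn simp: sum_distrib_left)
  also have "\<dots> = (\<Sum>i\<in>UNIV. \<integral>\<^sup>+x. ennreal ((\<Prod>j\<in>UNIV. std_normal_density (x $ j)) * hs i (x $ i)) \<partial>(lborel :: (real^'n) measure))"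
    by (rule nn_integral_sum) measurable
  also have "\<dots> = (\<Sum>i\<in>UNIV. \<integral>\<^sup>+u. ennreal (std_normal_density u * hs i u) \<partial>lborel)"
    by (rule sum.cong[OF refl], rule nn_marginal) (auto simp: hn)
  also have "\<dots> = (\<Sum>i\<in>UNIV. ennreal (if i \<in> K1 \<union> Km1 then AA \<tau> else 2 * BB \<tau>))"
  proof (rule sum.cong[OF refl])
    fix i :: 'n
    show "(\<integral>\<^sup>+u. ennreal (std_normal_density u * hs i u) \<partial>lborel) = ennreal (if i \<in> K1 \<union> Km1 then AA \<tau> else 2 * BB \<tau>)"
    proof (cases "i \<in> K1")
      case True then show ?thesis by (simp add: hs_def nn_P1)
    next
      case F1: False
      show ?thesis
      proof (cases "i \<in> Km1")
        case True then show ?thesis using F1 by (simp add: hs_def nn_P1_refl)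
      next
        case False
        have "(\<integral>\<^sup>+u. ennreal (std_normal_density u * hs i u) \<partial>lborel)
          = (\<integral>\<^sup>+u. ennreal (std_normal_density u * Q1 \<tau> u) + ennreal (std_normal_density u * Q1 \<tau> (-u)) \<partial>lborel)"
          by (rule nn_integral_cong) (simp add: hs_def F1 False distrib_left ennreal_plus[symmetric] Q1_nonneg del: ennreal_plus)
        also have "\<dots> = ennreal (BB \<tau>) + ennreal (BB \<tau>)"
          by (subst nn_integral_add) (auto simp: nn_Q1 nn_Q1_refl)
        finally show ?thesis using F1 False BB_nonneg[of \<tau>] by (simp add: ennreal_plus[symmetric] del: ennreal_plus)
      qed
    qed
  qed
  also have "\<dots> = ennreal (\<Sum>i\<in>UNIV. (if i \<in> K1 \<union> Km1 then AA \<tau> else 2 * BB \<tau>))"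
    by (rule sum_ennreal) (auto simp: AA_nonneg BB_nonneg)
  also have "(\<Sum>i\<in>UNIV. (if i \<in> K1 \<union> Km1 then AA \<tau> else 2 * BB \<tau>)) = real (card (K1 \<union> Km1)) * AA \<tau> + 2 * (real CARD('n) - real (card (K1 \<union> Km1))) * BB \<tau>"
  proof -
    have "card (- (K1 \<union> Km1)) = CARD('n) - card (K1 \<union> Km1)" by (simp add: Compl_eq_Diff_UNIV card_Diff_subset)
    moreover have "card (K1 \<union> Km1) \<le> CARD('n)" by (rule card_mono) auto
    moreover have "{i. i \<in> K1 \<or> i \<in> Km1} = K1 \<union> Km1" by auto
    ultimately show ?thesis by (simp add: sum.If_cases of_nat_diff algebra_simps)
  qed
  finally show ?thesis .
qed

lemma proj_bound:
  fixes C :: "(real^'n) set"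
  assumes cl: "closed C" and ne: "C \<noteq> {}" and cone: "\<And>y t. y \<in> C \<Longrightarrow> 0 \<le> t \<Longrightarrow> t *\<^sub>R y \<in> C"
    and pol: "\<And>y. y \<in> C \<Longrightarrow> s \<bullet> y \<le> 0"
  shows "(norm (closest_point C g))\<^sup>2 \<le> (norm (g - s))\<^sup>2"
proof -
  define p where "p = closest_point C g"
  have pC: "p \<in> C" unfolding p_def by (rule closest_point_in_set[OF cl ne])
  have le: "(norm (g - p))\<^sup>2 \<le> (norm (g - t *\<^sub>R p))\<^sup>2" if "0 \<le> t" for t
  proof -
    have "dist g p \<le> dist g (t *\<^sub>R p)" unfolding p_def
      by (rule closest_point_le[OF cl]) (use cone[OF pC that] p_def in auto)
    then show ?thesis by (simp add: dist_norm power_mono)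
  qed
  have ex: "(norm (g - t *\<^sub>R p))\<^sup>2 = g \<bullet> g - 2 * t * (g \<bullet> p) + t\<^sup>2 * (p \<bullet> p)" for t
    unfolding power2_norm_eq_inner by (simp add: inner_diff_left inner_diff_right inner_commute power2_eq_square algebra_simps)
  have key: "p \<bullet> p \<le> g \<bullet> p"
  proof (rule ccontr)
    assume nk: "\<not> p \<bullet> p \<le> g \<bullet> p"
    define a where "a = p \<bullet> p"
    define b where "b = g \<bullet> p"
    have a0: "0 < a" using nk a_def b_def by (metis inner_ge_zero le_less linorder_not_le inner_eq_zero_iff inner_zero_right)
    have ab: "b < a" using nk a_def b_def by simp
    have l1: "g \<bullet> g - 2 * 1 * b + 1\<^sup>2 * a \<le> g \<bullet> g - 2 * t * b + t\<^sup>2 * a" if "0 \<le> t" for t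
      using le[OF that] le[of 1] ex[of t] ex[of 1] a_def b_def by simp
    show False
    proof (cases "b \<le> 0")
      case True
      with l1[of 0] a0 show False by simp
    next
      case False
      have "- 2 * b + a \<le> - 2 * (b/a) * b + (b/a)\<^sup>2 * a" using l1[of "b/a"] False a0 by simp
      also have "\<dots> = - b\<^sup>2 / a" using a0 by (simp add: power2_eq_square field_simps)
      finally have "(- 2 * b + a) * a \<le> - b\<^sup>2" using a0 by (simp add: field_simps)
      then have "(a - b)\<^sup>2 \<le> 0" by (simp add: power2_eq_square algebra_simps)
      then show False using ab by (smt (verit) power2_less_0 zero_less_power2)
    qed
  qed
  have "p \<bullet> p \<le> p \<bullet> (g - s)" using key pol[OF pC] by (simp add: inner_diff_right inner_commute)
  also have "\<dots> \<le> norm p * norm (g - s)" by (rule Cauchy_Schwarz_ineq2[THEN order_trans[OF abs_ge_self]])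
  finally have "(norm p)\<^sup>2 \<le> norm p * norm (g - s)" by (simp add: power2_norm_eq_inner)
  then have "norm p \<le> norm (g - s)"
    by (cases "norm p = 0") (auto simp: power2_eq_square)
  then show ?thesis unfolding p_def by (simp add: power_mono)
qed

lemma sum_update_abs:
  fixes x :: "real^'n"
  shows "(\<Sum>j\<in>UNIV. \<bar>x $ j + (if j = i then c else 0)\<bar>) = (\<Sum>j\<in>UNIV. \<bar>x $ j\<bar>) + (\<bar>x $ i + c\<bar> - \<bar>x $ i\<bar>)"
proof -
  have "(\<Sum>j\<in>UNIV. \<bar>x $ j + (if j = i then c else 0)\<bar>) - (\<Sum>j\<in>UNIV. \<bar>x $ j\<bar>)
       = (\<Sum>j\<in>UNIV. (if j = i then \<bar>x $ i + c\<bar> - \<bar>x $ i\<bar> else 0))"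
    by (subst sum_subtractf[symmetric]) (rule sum.cong, auto)
  then show ?thesis by simp
qed

lemma subdiff_coord:
  fixes x s :: "real^'n"
  assumes box: "\<forall>j. \<bar>x $ j\<bar> \<le> 1" and s: "s \<in> subdifferential l1_box x" and c: "\<bar>x $ i + c\<bar> \<le> 1"
  shows "c * s $ i \<le> \<bar>x $ i + c\<bar> - \<bar>x $ i\<bar>"
proof -
  define y where "y = x + c *\<^sub>R axis i 1"
  have yc: "y $ j = x $ j + (if j = i then c else 0)" for j by (simp add: y_def axis_def)
  have ybox: "\<forall>j. \<bar>y $ j\<bar> \<le> 1" using box c by (simp add: yc)
  have ly: "l1_box y = ereal ((\<Sum>j\<in>UNIV. \<bar>x $ j\<bar>) + (\<bar>x $ i + c\<bar> - \<bar>x $ i\<bar>))"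
    using ybox by (simp add: l1_box_def yc sum_update_abs del: vector_add_component)
  have lx: "l1_box x = ereal (\<Sum>j\<in>UNIV. \<bar>x $ j\<bar>)" using box by (simp add: l1_box_def)
  have "s \<bullet> (y - x) = c * s $ i" by (simp add: y_def inner_axis)
  moreover have "l1_box y - l1_box x \<ge> ereal (s \<bullet> (y - x))" using s by (simp add: subdifferential_def)
  ultimately show ?thesis using ly lx by simp
qed

lemma l1_box_x_eq:
  fixes x :: "real^'n"
  assumes "\<forall>j. \<bar>x $ j\<bar> \<le> 1"
  shows "l1_box x = ereal (\<Sum>j\<in>UNIV. \<bar>x $ j\<bar>)" using assms by (simp add: l1_box_def)

lemma subdiff_char:
  fixes K1 Km1 :: "'n::finite set"
  assumes dis: "K1 \<inter> Km1 = {}"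
  defines "x \<equiv> (\<chi> i. indicator K1 i - indicator Km1 i) :: real^'n"
  shows "subdifferential l1_box x =
           {s. (\<forall>i\<in>K1. s $ i \<ge> 1) \<and> (\<forall>i\<in>Km1. s $ i \<le> -1)
               \<and> (\<forall>i. i \<notin> K1 \<union> Km1 \<longrightarrow> \<bar>s $ i\<bar> \<le> 1)}"
proof -
  have xK1: "x $ i = 1" if "i \<in> K1" for i using that dis by (auto simp: x_def indicator_def)
  have xKm1: "x $ i = -1" if "i \<in> Km1" for i using that dis by (auto simp: x_def indicator_def)
  have xo: "x $ i = 0" if "i \<notin> K1 \<union> Km1" for i using that by (auto simp: x_def indicator_def)
  have box: "\<forall>j. \<bar>x $ j\<bar> \<le> 1" by (auto simp: x_def indicator_def)
  show ?thesis
  proof (intro set_eqI iffI; clarsimp)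
    fix s assume s: "s \<in> subdifferential l1_box x"
    show "(\<forall>i\<in>K1. 1 \<le> s $ i) \<and> (\<forall>i\<in>Km1. s $ i \<le> -1) \<and> (\<forall>i. i \<notin> K1 \<and> i \<notin> Km1 \<longrightarrow> \<bar>s $ i\<bar> \<le> 1)"
    proof (intro conjI ballI allI impI)
      fix i assume "i \<in> K1"
      then show "1 \<le> s $ i" using subdiff_coord[OF box s, of i "-1"] xK1 by simp
    next
      fix i assume "i \<in> Km1"
      then show "s $ i \<le> -1" using subdiff_coord[OF box s, of i "1"] xKm1 by simp
    next
      fix i assume "i \<notin> K1 \<and> i \<notin> Km1"
      then show "\<bar>s $ i\<bar> \<le> 1" using subdiff_coord[OF box s, of i "1"] subdiff_coord[OF box s, of i "-1"] xo by auto
    qed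
  next
    fix s :: "real^'n"
    assume h1: "\<forall>i\<in>K1. 1 \<le> s $ i" and h2: "\<forall>i\<in>Km1. s $ i \<le> -1" and h3: "\<forall>i. i \<notin> K1 \<and> i \<notin> Km1 \<longrightarrow> \<bar>s $ i\<bar> \<le> 1"
    show "s \<in> subdifferential l1_box x"
      unfolding subdifferential_def
    proof (clarify)
      fix y :: "real^'n"
      show "ereal (s \<bullet> (y - x)) \<le> l1_box y - l1_box x"
      proof (cases "\<forall>j. \<bar>y $ j\<bar> \<le> 1")
        case False then have "l1_box y = \<infinity>" by (simp add: l1_box_def)
        then show ?thesis using l1_box_x_eq[OF box] by simp
      next
        case True
        have co: "s $ i * (y $ i - x $ i) \<le> \<bar>y $ i\<bar> - \<bar>x $ i\<bar>" for i
        proof -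
          have yi: "\<bar>y $ i\<bar> \<le> 1" using True by simp
          show ?thesis
          proof (cases "i \<in> K1")
            case True
            then have "1 \<le> s $ i" "x $ i = 1" using h1 xK1 by auto
            moreover have "y $ i - 1 \<le> 0" using yi by simp
            ultimately have "s $ i * (y $ i - x $ i) \<le> 1 * (y $ i - x $ i)"
              using mult_right_mono_neg[of 1 "s $ i" "y $ i - 1"] by simp
            then show ?thesis using \<open>x $ i = 1\<close> by simp
          next
            case F: False
            show ?thesis
            proof (cases "i \<in> Km1")
              case True
              then have "s $ i \<le> -1" "x $ i = -1" using h2 xKm1 by auto
              moreover have "y $ i + 1 \<ge> 0" using yi by simp
              ultimately have "s $ i * (y $ i - x $ i) \<le> (-1) * (y $ i - x $ i)"
                using mult_right_mono[of "s $ i" "-1" "y $ i + 1"] by simp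
              then show ?thesis using \<open>x $ i = -1\<close> by simp
            next
              case False
              then have "\<bar>s $ i\<bar> \<le> 1" "x $ i = 0" using h3 xo F by auto
              moreover have "s $ i * y $ i \<le> \<bar>y $ i\<bar>"
              proof -
                have "s $ i * y $ i \<le> \<bar>s $ i\<bar> * \<bar>y $ i\<bar>" by (simp add: abs_mult[symmetric])
                also have "\<dots> \<le> 1 * \<bar>y $ i\<bar>" by (rule mult_right_mono[OF \<open>\<bar>s $ i\<bar> \<le> 1\<close>]) simp
                finally show ?thesis by simp
              qed
              ultimately show ?thesis by simp
            qed
          qed
        qed
        have "s \<bullet> (y - x) \<le> (\<Sum>j\<in>UNIV. \<bar>y $ j\<bar>) - (\<Sum>j\<in>UNIV. \<bar>x $ j\<bar>)"
          unfolding inner_vec_def sum_subtractf[symmetric] by (rule sum_mono) (simp add: co)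
        then show ?thesis using l1_box_x_eq[OF box] l1_box_x_eq[OF True] by simp
      qed
    qed
  qed
qed

lemma c1: fixes g w \<tau> :: real assumes "0 \<le> \<tau>" "\<bar>1 + w\<bar> \<le> 1" shows "max g \<tau> * w \<le> \<tau> * (\<bar>1 + w\<bar> - \<bar>1\<bar>)"
proof -
  have w: "w \<le> 0" using assms(2) by (auto simp: abs_le_iff)
  have "max g \<tau> * w \<le> \<tau> * w" by (rule mult_right_mono_neg[OF _ w]) simp
  also have "\<dots> \<le> \<tau> * (\<bar>1 + w\<bar> - \<bar>1\<bar>)" by (rule mult_left_mono[OF _ assms(1)]) simp
  finally show ?thesis .
qed

lemma c2: fixes g w \<tau> :: real assumes "0 \<le> \<tau>" "\<bar>-1 + w\<bar> \<le> 1" shows "min g (-\<tau>) * w \<le> \<tau> * (\<bar>-1 + w\<bar> - \<bar>-1\<bar>)"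
proof -
  have w: "0 \<le> w" using assms(2) by (auto simp: abs_le_iff)
  have "min g (-\<tau>) * w \<le> (-\<tau>) * w" by (rule mult_right_mono[OF _ w]) simp
  also have "\<dots> = \<tau> * (- w)" by simp
  also have "\<dots> \<le> \<tau> * (\<bar>-1 + w\<bar> - \<bar>-1\<bar>)" by (rule mult_left_mono[OF _ assms(1)]) simp
  finally show ?thesis .
qed

lemma c3: fixes g w \<tau> :: real assumes "0 \<le> \<tau>" shows "max (-\<tau>) (min g \<tau>) * w \<le> \<tau> * (\<bar>0 + w\<bar> - \<bar>0\<bar>)"
proof -
  have "max (-\<tau>) (min g \<tau>) * w \<le> \<bar>max (-\<tau>) (min g \<tau>)\<bar> * \<bar>w\<bar>"
    using abs_ge_self[of "max (-\<tau>) (min g \<tau>) * w"] by (simp only: abs_mult)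
  also have "\<dots> \<le> \<tau> * \<bar>w\<bar>" by (rule mult_right_mono) (use assms in auto)
  finally show ?thesis by simp
qed

definition sv :: "'n set \<Rightarrow> 'n set \<Rightarrow> real \<Rightarrow> real^'n \<Rightarrow> real^'n" where
  "sv K1 Km1 \<tau> g = (\<chi> i. if i \<in> K1 then max (g $ i) \<tau> else if i \<in> Km1 then min (g $ i) (-\<tau>) else max (-\<tau>) (min (g $ i) \<tau>))"

lemma D_polar:
  fixes K1 Km1 :: "'n::finite set"
  assumes dis: "K1 \<inter> Km1 = {}" and tau: "0 \<le> \<tau>"
    and xdef: "x = ((\<chi> i. indicator K1 i - indicator Km1 i) :: real^'n)"
    and y: "y \<in> descent_cone l1_box x"
  shows "sv K1 Km1 \<tau> g \<bullet> y \<le> 0"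
proof -
  have xK1: "x $ i = 1" if "i \<in> K1" for i using that dis by (auto simp: xdef indicator_def)
  have xKm1: "x $ i = -1" if "i \<in> Km1" for i using that dis by (auto simp: xdef indicator_def)
  have xo: "x $ i = 0" if "i \<notin> K1" "i \<notin> Km1" for i using that by (auto simp: xdef indicator_def)
  have box: "\<forall>j. \<bar>x $ j\<bar> \<le> 1" by (auto simp: xdef indicator_def)
  obtain t0 where t0: "0 < t0" and le: "l1_box (x + t0 *\<^sub>R y) \<le> l1_box x"
    using y unfolding descent_cone_def by auto
  define z where "z = x + t0 *\<^sub>R y"
  have zbox: "\<forall>j. \<bar>z $ j\<bar> \<le> 1"
  proof (rule ccontr)
    assume "\<not> (\<forall>j. \<bar>z $ j\<bar> \<le> 1)"
    then have "l1_box z = \<infinity>" by (simp add: l1_box_def)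
    then show False using le l1_box_x_eq[OF box] z_def by simp
  qed
  have sumle: "(\<Sum>j\<in>UNIV. \<bar>z $ j\<bar>) \<le> (\<Sum>j\<in>UNIV. \<bar>x $ j\<bar>)"
    using le l1_box_x_eq[OF box] l1_box_x_eq[OF zbox] z_def by simp
  have co: "sv K1 Km1 \<tau> g $ i * (t0 * y $ i) \<le> \<tau> * (\<bar>z $ i\<bar> - \<bar>x $ i\<bar>)" for i
  proof -
    have zi: "z $ i = x $ i + t0 * y $ i" by (simp add: z_def)
    have zb: "\<bar>x $ i + t0 * y $ i\<bar> \<le> 1" using zbox zi by metis
    show ?thesis
    proof (cases "i \<in> K1")
      case True then show ?thesis using c1[OF tau, of "t0 * y $ i" "g $ i"] zb xK1[OF True] zi by (simp add: sv_def)
    next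
      case F: False
      show ?thesis
      proof (cases "i \<in> Km1")
        case True then show ?thesis using c2[OF tau, of "t0 * y $ i" "g $ i"] zb xKm1[OF True] zi F by (simp add: sv_def)
      next
        case False then show ?thesis using c3[OF tau, of "g $ i" "t0 * y $ i"] xo[OF F False] zi F by (simp add: sv_def)
      qed
    qed
  qed
  have "t0 * (sv K1 Km1 \<tau> g \<bullet> y) = (\<Sum>i\<in>UNIV. sv K1 Km1 \<tau> g $ i * (t0 * y $ i))"
    by (simp add: inner_vec_def sum_distrib_left mult_ac)
  also have "\<dots> \<le> (\<Sum>i\<in>UNIV. \<tau> * (\<bar>z $ i\<bar> - \<bar>x $ i\<bar>))" by (rule sum_mono) (rule co)
  also have "\<dots> = \<tau> * ((\<Sum>j\<in>UNIV. \<bar>z $ j\<bar>) - (\<Sum>j\<in>UNIV. \<bar>x $ j\<bar>))"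
    by (simp add: sum_distrib_left sum_subtractf right_diff_distrib)
  also have "\<dots> \<le> 0" using sumle tau by (simp add: mult_nonneg_nonpos)
  finally show ?thesis using t0 by (simp add: mult_le_0_iff)
qed

lemma D_zero: "0 \<in> descent_cone f x"
  unfolding descent_cone_def by (auto intro: exI[of _ 1])

lemma D_scale: assumes "y \<in> descent_cone f x" "0 < t" shows "t *\<^sub>R y \<in> descent_cone f x"
proof -
  obtain t0 where "0 < t0" "f (x + t0 *\<^sub>R y) \<le> f x" using assms(1) unfolding descent_cone_def by auto
  moreover have "(t0 / t) *\<^sub>R (t *\<^sub>R y) = t0 *\<^sub>R y" using assms(2) by simp
  ultimately show ?thesis unfolding descent_cone_def using assms(2)
    by (intro UN_I[of "t0 / t"]) auto
qed

lemma closure_D_cone: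
  assumes "y \<in> closure (descent_cone f x)" "0 \<le> t"
  shows "t *\<^sub>R y \<in> closure (descent_cone f x)"
proof (cases "t = 0")
  case True then show ?thesis using D_zero closure_subset by auto
next
  case False
  then have t: "0 < t" using assms(2) by simp
  have "t *\<^sub>R y \<in> (*\<^sub>R) t ` closure (descent_cone f x)" using assms(1) by auto
  also have "\<dots> = closure ((*\<^sub>R) t ` descent_cone f x)" by (rule closure_scaleR)
  also have "\<dots> \<subseteq> closure (descent_cone f x)" by (rule closure_mono) (auto intro: D_scale[OF _ t])
  finally show ?thesis .
qed

lemma norm_sv:
  assumes tau: "0 \<le> \<tau>"
  shows "(norm (g - sv K1 Km1 \<tau> g))\<^sup>2 = (\<Sum>i\<in>UNIV. (\<lambda>i u. if i \<in> K1 then P1 \<tau> u else if i \<in> Km1 then P1 \<tau> (-u) else Q1 \<tau> u + Q1 \<tau> (-u)) i (g $ i))"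
proof -
  have "(norm (g - sv K1 Km1 \<tau> g))\<^sup>2 = (\<Sum>i\<in>UNIV. (g $ i - sv K1 Km1 \<tau> g $ i)\<^sup>2)"
    unfolding power2_norm_eq_inner by (simp add: inner_vec_def power2_eq_square)
  also have "\<dots> = (\<Sum>i\<in>UNIV. (\<lambda>i u. if i \<in> K1 then P1 \<tau> u else if i \<in> Km1 then P1 \<tau> (-u) else Q1 \<tau> u + Q1 \<tau> (-u)) i (g $ i))"
  proof (rule sum.cong[OF refl])
    fix i
    show "(g $ i - sv K1 Km1 \<tau> g $ i)\<^sup>2 = (\<lambda>i u. if i \<in> K1 then P1 \<tau> u else if i \<in> Km1 then P1 \<tau> (-u) else Q1 \<tau> u + Q1 \<tau> (-u)) i (g $ i)"
      using tau by (auto simp: sv_def P1_def Q1_def max_def min_def power2_eq_square algebra_simps)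
  qed
  finally show ?thesis .
qed

theorem theorem3p4:
  fixes K1 Km1 :: "'n::finite set"
  assumes "K1 \<inter> Km1 = {}"
  defines "x \<equiv> (\<chi> i. indicator K1 i - indicator Km1 i) :: real^'n"
  defines "k \<equiv> card (K1 \<union> Km1)"
  shows "subdifferential l1_box x =
           {s. (\<forall>i\<in>K1. s $ i \<ge> 1) \<and> (\<forall>i\<in>Km1. s $ i \<le> -1)
               \<and> (\<forall>i. i \<notin> K1 \<union> Km1 \<longrightarrow> \<bar>s $ i\<bar> \<le> 1)}
       \<and> stat_dim (closure (descent_cone l1_box x)) \<le> Delta_pm_ter CARD('n) k"
proof
  show "subdifferential l1_box x =
           {s. (\<forall>i\<in>K1. s $ i \<ge> 1) \<and> (\<forall>i\<in>Km1. s $ i \<le> -1)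
               \<and> (\<forall>i. i \<notin> K1 \<union> Km1 \<longrightarrow> \<bar>s $ i\<bar> \<le> 1)}"
    unfolding x_def by (rule subdiff_char[OF assms(1)])
next
  define C where "C = closure (descent_cone l1_box x)"
  have bound: "stat_dim C \<le> real k * AA \<tau> + 2 * (real CARD('n) - real k) * BB \<tau>" if tau: "0 \<le> \<tau>" for \<tau>
  proof -
    define hs where "hs = (\<lambda>i u. if i \<in> K1 then P1 \<tau> u else if i \<in> Km1 then P1 \<tau> (-u) else Q1 \<tau> u + Q1 \<tau> (-u))"
    have kle: "k \<le> CARD('n)" unfolding k_def by (rule card_mono) auto
    have F0: "0 \<le> real k * AA \<tau> + 2 * (real CARD('n) - real k) * BB \<tau>"
      using kle AA_nonneg[of \<tau>] BB_nonneg[of \<tau>] by (intro add_nonneg_nonneg mult_nonneg_nonneg) auto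
    have pw: "(norm (closest_point C g))\<^sup>2 \<le> (\<Sum>i\<in>UNIV. hs i (g $ i))" for g
    proof -
      have "(norm (closest_point C g))\<^sup>2 \<le> (norm (g - sv K1 Km1 \<tau> g))\<^sup>2"
      proof (rule proj_bound)
        show "closed C" unfolding C_def by simp
        show "C \<noteq> {}" unfolding C_def using D_zero closure_subset by blast
        show "\<And>y t. y \<in> C \<Longrightarrow> 0 \<le> t \<Longrightarrow> t *\<^sub>R y \<in> C" unfolding C_def by (rule closure_D_cone)
        have "C \<subseteq> {y. sv K1 Km1 \<tau> g \<bullet> y \<le> 0}" unfolding C_def
          by (rule closure_minimal) (auto intro: D_polar[OF assms(1) tau x_def[THEN meta_eq_to_obj_eq]] closed_halfspace_le)
        then show "\<And>y. y \<in> C \<Longrightarrow> sv K1 Km1 \<tau> g \<bullet> y \<le> 0" by auto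
      qed
      then show ?thesis using norm_sv[OF tau, of g K1 Km1] unfolding hs_def by simp
    qed
    have "(\<integral>\<^sup>+g. ennreal ((\<Prod>i\<in>UNIV. std_normal_density (g $ i)) * (norm (closest_point C g))\<^sup>2) \<partial>lborel)
        \<le> (\<integral>\<^sup>+g. ennreal ((\<Prod>j\<in>UNIV. std_normal_density (g $ j)) * (\<Sum>i\<in>UNIV. hs i (g $ i))) \<partial>(lborel :: (real^'n) measure))"
      by (rule nn_integral_mono) (auto intro!: ennreal_leI mult_left_mono pw prod_nonneg)
    also have "\<dots> = ennreal (real k * AA \<tau> + 2 * (real CARD('n) - real k) * BB \<tau>)"
      unfolding hs_def k_def by (rule nn_total[OF assms(1)])
    finally show ?thesis unfolding stat_dim_def by (rule integral_real_bounded[OF F0])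
  qed
  have "stat_dim C \<le> (INF \<tau>\<in>{0..}. real k * AA \<tau> + 2 * (real CARD('n) - real k) * BB \<tau>)"
  proof (rule cINF_greatest)
    show "{0::real..} \<noteq> {}" by auto
    fix \<tau> :: real assume "\<tau> \<in> {0..}"
    then show "stat_dim C \<le> real k * AA \<tau> + 2 * (real CARD('n) - real k) * BB \<tau>" by (intro bound) simp
  qed
  then show "stat_dim (closure (descent_cone l1_box x)) \<le> Delta_pm_ter CARD('n) k"
    unfolding C_def Delta_pm_ter_def AA_def BB_def .
qed
end
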